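(* Let $\Omega=\{1,\ldots,n\}$, $k\in\Omega$, and let $\phi$ be a generalized metric satisfying the triangle inequality, i.e. $\phi(x\|y)\le\phi(x\|z)+\phi(z\|y)$ for all distributions $x,y,z$ on a common finite set. Then $\widehat{\phi}_k(p\|q)\le\widehat{\phi}_k(p\|r)+\widehat{\phi}_k(r\|q)$ for all $\Omega$-point distributions $p,q,r$.
   Context: An $\Omega$-point distribution is a probability vector on $\Omega=\{1,\ldots,n\}$. $\phi$ assigns a real number $\phi(p\|q)$ to each pair of probability distributions on the same finite set. $\mathcal P_k(\Omega)$ is the set of partitions of $\Omega$ into exactly $k$ nonempty disjoint cells; for $\rho\in\mathcal P_k(\Omega)$, $\widehat p_\rho(a)=\sum_{i\in a}p(i)$ for $a\in\rho$ defines a distribution on the cells of $\rho$. The Sketch $\star$-metric is $\widehat{\phi}_k(p\|q)=\max_{\rho\in\mathcal P_k(\Omega)}\phi(\widehat p_\rho\|\widehat q_\rho)$. *)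

theory Defs
  imports Complex_Main "HOL-Library.Disjoint_Sets"
begin

definition prob_dist :: "'a set \<Rightarrow> ('a \<Rightarrow> real) \<Rightarrow> bool" where
  "prob_dist A p \<longleftrightarrow> finite A \<and> (\<forall>x\<in>A. 0 \<le> p x) \<and> sum p A = 1"

definition partitions_k :: "'a set \<Rightarrow> nat \<Rightarrow> 'a set set set" where
  "partitions_k \<Omega> k = {\<rho>. partition_on \<Omega> \<rho> \<and> card \<rho> = k}"

definition coarsen :: "'a set set \<Rightarrow> ('a \<Rightarrow> real) \<Rightarrow> ('a set \<Rightarrow> real)" where
  "coarsen \<rho> p = (\<lambda>a. if a \<in> \<rho> then sum p a else 0)"

text \<open>The Sketch star-metric. phi takes the carrier set of the distributions
  as first argument.\<close>
definition sketch :: "('a set set \<Rightarrow> ('a set \<Rightarrow> real) \<Rightarrow> ('a set \<Rightarrow> real) \<Rightarrow> real)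
    \<Rightarrow> 'a set \<Rightarrow> nat \<Rightarrow> ('a \<Rightarrow> real) \<Rightarrow> ('a \<Rightarrow> real) \<Rightarrow> real" where
  "sketch \<phi> \<Omega> k p q = Max ((\<lambda>\<rho>. \<phi> \<rho> (coarsen \<rho> p) (coarsen \<rho> q)) ` partitions_k \<Omega> k)"

end

theory Submission
  imports Defs
begin

lemma coarsen_prob:
  assumes "\<rho> \<in> partitions_k {1..n} k" "prob_dist {1..(n::nat)} p"
  shows "prob_dist \<rho> (coarsen \<rho> p)"
proof -
  have P: "partition_on {1..n} \<rho>" using assms(1) by (simp add: partitions_k_def)
  have fin: "finite \<rho>" using P finite_elements[of "{1..n}" \<rho>] by simp
  have sub: "\<And>a. a \<in> \<rho> \<Longrightarrow> a \<subseteq> {1..n}" using P partition_onD1 by blast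
  have fa: "\<And>a. a \<in> \<rho> \<Longrightarrow> finite a" using sub finite_subset by blast
  have nn: "\<forall>a\<in>\<rho>. 0 \<le> coarsen \<rho> p a"
    using assms(2) sub by (auto simp: coarsen_def prob_dist_def intro!: sum_nonneg)
  have "sum (coarsen \<rho> p) \<rho> = sum (\<lambda>a. sum p a) \<rho>" by (simp add: coarsen_def)
  also have "\<dots> = sum p (\<Union>\<rho>)"
    using sum.Union_disjoint[of \<rho> p] fa P by (auto simp: partition_on_def disjoint_def)
  also have "\<Union>\<rho> = {1..n}" using P by (simp add: partition_on_def)
  finally show ?thesis using fin nn assms(2) by (simp add: prob_dist_def)
qed

lemma parts_fin: "finite (partitions_k {1..(n::nat)} k)"
proof -
  have "partitions_k {1..n} k \<subseteq> Pow (Pow {1..n})"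
    by (auto simp: partitions_k_def dest: partition_onD1)
  then show ?thesis by (rule finite_subset) simp
qed

lemma parts_ne:
  assumes "k \<in> {1..(n::nat)}"
  shows "partitions_k {1..n} k \<noteq> {}"
proof -
  define \<rho> where "\<rho> = (\<lambda>i. {i}) ` {1..<k} \<union> {{k..n}}"
  have "partition_on {1..n} \<rho>"
    unfolding partition_on_def disjoint_def \<rho>_def using assms by auto
  moreover have "card \<rho> = k"
  proof -
    have "card ((\<lambda>i. {i}) ` {1..<k}) = k - 1" by (subst card_image) (auto simp: inj_on_def)
    moreover have "{k..n} \<notin> (\<lambda>i. {i}) ` {1..<k}" using assms by auto
    ultimately show ?thesis unfolding \<rho>_def using assms by (simp add: card_insert_if)
  qed
  ultimately show ?thesis by (auto simp: partitions_k_def)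
qed

theorem lemma4:
  fixes \<phi> :: "nat set set \<Rightarrow> (nat set \<Rightarrow> real) \<Rightarrow> (nat set \<Rightarrow> real) \<Rightarrow> real"
    and n k :: nat and p q r :: "nat \<Rightarrow> real"
  assumes tri: "\<And>A x y z. prob_dist A x \<Longrightarrow> prob_dist A y \<Longrightarrow> prob_dist A z \<Longrightarrow>
                  \<phi> A x y \<le> \<phi> A x z + \<phi> A z y"
    and k: "k \<in> {1..n}"
    and p: "prob_dist {1..n} p" and q: "prob_dist {1..n} q" and r: "prob_dist {1..n} r"
  shows "sketch \<phi> {1..n} k p q \<le> sketch \<phi> {1..n} k p r + sketch \<phi> {1..n} k r q"
proof -
  let ?P = "partitions_k {1..n} k"
  let ?S = "\<lambda>x y. (\<lambda>\<rho>. \<phi> \<rho> (coarsen \<rho> x) (coarsen \<rho> y)) ` ?P"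
  have fin: "\<And>x y. finite (?S x y)" using parts_fin by simp
  have ne: "?P \<noteq> {}" using parts_ne[OF k] .
  obtain \<rho> where \<rho>: "\<rho> \<in> ?P" "sketch \<phi> {1..n} k p q = \<phi> \<rho> (coarsen \<rho> p) (coarsen \<rho> q)"
  proof -
    have "Max (?S p q) \<in> ?S p q" using fin ne by (intro Max_in) auto
    then show ?thesis using that unfolding sketch_def by auto
  qed
  have "\<phi> \<rho> (coarsen \<rho> p) (coarsen \<rho> q) \<le> \<phi> \<rho> (coarsen \<rho> p) (coarsen \<rho> r) + \<phi> \<rho> (coarsen \<rho> r) (coarsen \<rho> q)"
    using tri coarsen_prob[OF \<rho>(1)] p q r by blast
  also have "\<phi> \<rho> (coarsen \<rho> p) (coarsen \<rho> r) \<le> sketch \<phi> {1..n} k p r"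
    unfolding sketch_def using fin \<rho>(1) by (intro Max_ge) auto
  also have "\<phi> \<rho> (coarsen \<rho> r) (coarsen \<rho> q) \<le> sketch \<phi> {1..n} k r q"
    unfolding sketch_def using fin \<rho>(1) by (intro Max_ge) auto
  finally show ?thesis using \<rho>(2) by simp
qed

end
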